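(* Let $G$ be a compact abelian group with discrete dual group $\Gamma$, let $E \subset \Gamma$, $n \in \mathbb{N}$ and $p$ a prime number. The following are equivalent: (1) $E$ is $p^n$-PR; (2) for all $1 \le k \le n$, the map $\pi_{p^k}$ is one-to-one on $E$ and $\pi_{p^k}(E)$ is $p^{n+1-k}$-PR as a subset of $\Gamma/\Gamma_{p^k}$; (3) for some $1 \le k \le n$, the map $\pi_{p^k}$ is one-to-one on $E$ and $\pi_{p^k}(E)$ is $p^{n+1-k}$-PR as a subset of $\Gamma/\Gamma_{p^k}$.
   Context: Characters are written multiplicatively; $\mathbb{Z}_N$ is identified with the $N$-th roots of unity in the unit circle $\mathbb{T}$. For a discrete abelian group $\Delta$ with compact dual $\widehat{\Delta}$, a subset $E \subset \Delta$ is $N$-PR if for every function $\varphi: E \to \mathbb{Z}_N$ there exists $x \in \widehat{\Delta}$ with $\varphi(\gamma) = \gamma(x)$ for all $\gamma \in E$. Let $\Gamma_0$ be the torsion subgroup of $\Gamma$; for a prime $p$ and $k \in \mathbb{N}$, $\Gamma_{p^k}$ is the subgroup of $\Gamma_0$ of elements whose order is not divisible by $p^k$, and $\pi_{p^k}: \Gamma \to \Gamma/\Gamma_{p^k}$ is the quotient map. *)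

theory Defs
  imports "HOL-Algebra.Algebra" Complex_Main
begin

text \<open>For a discrete abelian group every homomorphism is continuous, and by Pontryagin
  duality the points of the compact dual group are exactly these characters.\<close>
definition character :: "('a, 'b) monoid_scheme \<Rightarrow> ('a \<Rightarrow> complex) \<Rightarrow> bool" where
  "character D \<chi> \<longleftrightarrow>
     (\<forall>x \<in> carrier D. cmod (\<chi> x) = 1) \<and>
     (\<forall>x \<in> carrier D. \<forall>y \<in> carrier D. \<chi> (x \<otimes>\<^bsub>D\<^esub> y) = \<chi> x * \<chi> y)"

text \<open>Z_N identified with the N-th roots of unity.\<close>
definition roots_of_unity :: "nat \<Rightarrow> complex set" where
  "roots_of_unity N = {z. z ^ N = 1}"

definition PR :: "nat \<Rightarrow> ('a, 'b) monoid_scheme \<Rightarrow> 'a set \<Rightarrow> bool" where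
  "PR N D E \<longleftrightarrow>
     (\<forall>\<phi> \<in> E \<rightarrow> roots_of_unity N. \<exists>\<chi>. character D \<chi> \<and> (\<forall>\<gamma> \<in> E. \<chi> \<gamma> = \<phi> \<gamma>))"

definition torsion :: "('a, 'b) monoid_scheme \<Rightarrow> 'a set" where
  "torsion G = {x \<in> carrier G. \<exists>m::nat. m > 0 \<and> x [^]\<^bsub>G\<^esub> m = \<one>\<^bsub>G\<^esub>}"

definition sub_not_dvd :: "('a, 'b) monoid_scheme \<Rightarrow> nat \<Rightarrow> 'a set" where
  "sub_not_dvd G q = {x \<in> torsion G. \<not> q dvd group.ord G x}"

definition quot_map :: "('a, 'b) monoid_scheme \<Rightarrow> 'a set \<Rightarrow> 'a \<Rightarrow> 'a set" where
  "quot_map G H x = H #>\<^bsub>G\<^esub> x"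

end

theory Submission
  imports Defs
begin
definition char_on :: "('a, 'b) monoid_scheme \<Rightarrow> 'a set \<Rightarrow> ('a \<Rightarrow> complex) \<Rightarrow> bool" where
  "char_on G K f \<longleftrightarrow> (\<forall>x \<in> K. cmod (f x) = 1) \<and>
     (\<forall>x \<in> K. \<forall>y \<in> K. f (x \<otimes>\<^bsub>G\<^esub> y) = f x * f y)"

lemma character_char_on: "character G f \<longleftrightarrow> char_on G (carrier G) f"
  by (simp add: character_def char_on_def)

lemma complex_root_unit:
  assumes "cmod z = 1" "m > 0"
  shows "\<exists>w. cmod w = 1 \<and> w ^ m = z"
proof -
  have "z \<noteq> 0" using assms by auto
  then have "sgn z = cis (Arg z)" using Arg_correct by blast
  moreover have "sgn z = z" using assms by (simp add: sgn_eq)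
  ultimately have z: "z = cis (Arg z)" by simp
  have "cis (Arg z / m) ^ m = cis (Arg z)"
    using assms by (simp add: DeMoivre)
  then show ?thesis using z by (intro exI[of _ "cis (Arg z / m)"]) simp
qed

context comm_group
begin

lemma sub_npow: "subgroup H G \<Longrightarrow> h \<in> H \<Longrightarrow> h [^] (n::nat) \<in> H"
  using subgroup_int_pow_closed[of H h "int n"] by (simp add: int_pow_int)

lemma char_on_one:
  assumes "subgroup K G" "char_on G K f"
  shows "f \<one> = 1"
proof -
  have "\<one> \<in> K" using assms subgroup.one_closed by blast
  then have "f \<one> = f \<one> * f \<one>" "cmod (f \<one>) = 1" using assms unfolding char_on_def
    by (metis l_one one_closed)+
  then show ?thesis by (metis mult_cancel_right1 norm_zero zero_neq_one)
qed

lemma char_on_nz: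
  assumes "char_on G K f" "x \<in> K"
  shows "f x \<noteq> 0"
  using assms unfolding char_on_def by fastforce

lemma char_on_inv:
  assumes "subgroup K G" "char_on G K f" "x \<in> K"
  shows "f (inv x) = inverse (f x)"
proof -
  have "inv x \<in> K" using subgroup.m_inv_closed[OF assms(1,3)] by simp
  then have "f (x \<otimes> inv x) = f x * f (inv x)" using assms unfolding char_on_def by blast
  moreover have "x \<otimes> inv x = \<one>" using subgroup.mem_carrier[OF assms(1,3)] r_inv by simp
  ultimately have "f x * f (inv x) = 1" using char_on_one[OF assms(1,2)] by simp
  then show ?thesis using char_on_nz[OF assms(2,3)] by (simp add: field_simps)
qed

lemma char_on_pow:
  assumes "subgroup K G" "char_on G K f" "x \<in> K"
  shows "f (x [^] (n::nat)) = f x ^ n"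
proof (induction n)
  case 0
  then show ?case using char_on_one assms by simp
next
  case (Suc n)
  have "x [^] n \<in> K" using assms sub_npow[OF assms(1)] by blast
  then have "f (x [^] n \<otimes> x) = f (x [^] n) * f x" using assms unfolding char_on_def by blast
  then show ?case using Suc by simp
qed

lemma char_on_ipow:
  assumes "subgroup K G" "char_on G K f" "x \<in> K"
  shows "f (x [^] (i::int)) = f x powi i"
proof (cases "i < 0")
  case True
  have "x [^] nat (-i) \<in> K" using sub_npow[OF assms(1,3)] .
  then have "f (inv (x [^] nat (-i))) = inverse (f (x [^] nat (-i)))"
    using char_on_inv[OF assms(1,2)] by blast
  also have "\<dots> = inverse (f x ^ nat (-i))" using char_on_pow[OF assms] by simp
  also have "\<dots> = f x powi i" using True by (simp add: power_int_def power_inverse)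
  also have "inv (x [^] nat (-i)) = x [^] i"
  proof -
    have "x [^] i = x [^] (- int (nat (-i)))" using True by simp
    also have "\<dots> = inv (x [^] nat (-i))" using int_pow_neg_int subgroup.mem_carrier[OF assms(1,3)] by blast
    finally show ?thesis by simp
  qed
  finally show ?thesis .
next
  case False
  then have "x [^] i = x [^] nat i" using int_pow_int[where x=x and n="nat i"] by simp
  moreover have "f x powi i = f x ^ nat i" using False by (simp add: power_int_def)
  ultimately show ?thesis using char_on_pow[OF assms] by simp
qed

lemma char_on_finprod:
  assumes "subgroup K G" "char_on G K f" "a ` S \<subseteq> K"
  shows "finprod G a S \<in> K \<and> f (finprod G a S) = (\<Prod>x\<in>S. f (a x))"
  using assms(3)
proof (induction S rule: infinite_finite_induct)
  case (infinite A)
  then show ?case using assms char_on_one subgroup.one_closed by fastforce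
next
  case empty
  then show ?case using assms char_on_one subgroup.one_closed by fastforce
next
  case (insert y F)
  have sub: "K \<subseteq> carrier G" using assms subgroup.subset by blast
  have aF: "a \<in> F \<rightarrow> carrier G" "a y \<in> carrier G" using insert sub by auto
  have IH: "finprod G a F \<in> K" "f (finprod G a F) = (\<Prod>x\<in>F. f (a x))" using insert by auto
  have ay: "a y \<in> K" using insert by auto
  have "finprod G a (insert y F) = a y \<otimes> finprod G a F"
    using finprod_insert[OF insert(1,2) aF] .
  moreover have "a y \<otimes> finprod G a F \<in> K" using IH ay subgroup.m_closed[OF assms(1)] by blast
  moreover have "f (a y \<otimes> finprod G a F) = f (a y) * f (finprod G a F)"
    using assms(2) IH ay unfolding char_on_def by blast
  ultimately show ?case using IH insert by simp
qed

end

definition fp :: "('a, 'b) monoid_scheme \<Rightarrow> 'a set \<Rightarrow> ('a \<Rightarrow> int) \<Rightarrow> 'a" where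
  "fp G S c = finprod G (\<lambda>e. e [^]\<^bsub>G\<^esub> c e) S"

definition indepH :: "nat \<Rightarrow> ('a, 'b) monoid_scheme \<Rightarrow> 'a set \<Rightarrow> 'a set \<Rightarrow> bool" where
  "indepH N G E H \<longleftrightarrow> (\<forall>S c. finite S \<longrightarrow> S \<subseteq> E \<longrightarrow> fp G S c \<in> H \<longrightarrow> (\<forall>e\<in>S. int N dvd c e))"

context comm_group
begin

lemma fp_closed: "S \<subseteq> carrier G \<Longrightarrow> fp G S c \<in> carrier G"
  unfolding fp_def by (intro finprod_closed) auto

lemma fp_cong: "S \<subseteq> carrier G \<Longrightarrow> (\<And>e. e \<in> S \<Longrightarrow> c e = d e) \<Longrightarrow> fp G S c = fp G S d"
  unfolding fp_def by (intro finprod_cong') auto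

lemma fp_add:
  assumes "S \<subseteq> carrier G"
  shows "fp G S (\<lambda>e. c e + d e) = fp G S c \<otimes> fp G S d"
proof -
  have "fp G S (\<lambda>e. c e + d e) = finprod G (\<lambda>e. e [^] c e \<otimes> e [^] d e) S"
    unfolding fp_def by (intro finprod_cong') (use assms in \<open>auto simp: int_pow_mult\<close>)
  also have "\<dots> = fp G S c \<otimes> fp G S d"
    unfolding fp_def by (rule finprod_multf) (use assms in auto)
  finally show ?thesis .
qed

lemma fp_zero: "fp G S (\<lambda>e. 0) = \<one>"
  unfolding fp_def by (intro finprod_one_eqI) simp

lemma fp_neg:
  assumes "S \<subseteq> carrier G"
  shows "fp G S (\<lambda>e. - c e) = inv (fp G S c)"
proof -
  have "fp G S (\<lambda>e. - c e + c e) = fp G S (\<lambda>e. - c e) \<otimes> fp G S c"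
    using fp_add[OF assms] .
  then have "fp G S (\<lambda>e. - c e) \<otimes> fp G S c = \<one>" using fp_zero by simp
  then show ?thesis using inv_equality fp_closed[OF assms] by metis
qed

lemma fp_ipow:
  assumes "S \<subseteq> carrier G"
  shows "fp G S c [^] (m::int) = fp G S (\<lambda>e. c e * m)"
  using assms
proof (induction S rule: infinite_finite_induct)
  case (infinite A)
  then show ?case by (simp add: fp_def)
next
  case empty
  then show ?case by (simp add: fp_def)
next
  case (insert y F)
  have y: "y \<in> carrier G" and F: "F \<subseteq> carrier G" using insert by auto
  have "fp G (insert y F) c = y [^] c y \<otimes> fp G F c"
    unfolding fp_def by (rule finprod_insert) (use insert y F in auto)
  moreover have "fp G (insert y F) (\<lambda>e. c e * m) = y [^] (c y * m) \<otimes> fp G F (\<lambda>e. c e * m)"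
    unfolding fp_def by (rule finprod_insert) (use insert y F in auto)
  moreover have "(y [^] c y \<otimes> fp G F c) [^] m = (y [^] c y) [^] m \<otimes> fp G F c [^] m"
    by (rule int_pow_mult_distrib) (use y F fp_closed m_comm in auto)
  moreover have "(y [^] c y) [^] m = y [^] (c y * m)" using int_pow_pow y by blast
  ultimately show ?case using insert F by simp
qed

lemma fp_extend:
  assumes "finite T" "S \<subseteq> T" "T \<subseteq> carrier G"
  shows "fp G S c = fp G T (\<lambda>e. if e \<in> S then c e else 0)"
  unfolding fp_def by (rule finprod_mono_neutral_cong_left) (use assms in auto)

lemma fp_single: "e \<in> carrier G \<Longrightarrow> fp G {e} c = e [^] c e"
  unfolding fp_def by simp

lemma fp_two: "e \<in> carrier G \<Longrightarrow> e' \<in> carrier G \<Longrightarrow> e \<noteq> e' \<Longrightarrow>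
   fp G {e, e'} c = e [^] c e \<otimes> e' [^] c e'"
  unfolding fp_def by simp

lemma fp_hom:
  assumes "h \<in> hom G G2" "comm_group G2" "S \<subseteq> carrier G"
  shows "h (fp G S c) = finprod G2 (\<lambda>e. h e [^]\<^bsub>G2\<^esub> c e) S"
  using assms(3)
proof (induction S rule: infinite_finite_induct)
  case (infinite A)
  then show ?case by (simp add: fp_def finprod_def hom_one[OF assms(1)] assms(2) comm_group.axioms(2) is_group)
next
  case empty
  have "group G2" using assms(2) comm_group.axioms(2) by blast
  then show ?case using hom_one[OF assms(1) is_group]
    by (simp add: fp_def comm_monoid.finprod_empty[OF comm_group.axioms(1)[OF assms(2)]])
next
  case (insert y F)
  have y: "y \<in> carrier G" and F: "F \<subseteq> carrier G" using insert.prems by auto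
  have g2: "group G2" using assms(2) comm_group.axioms(2) by blast
  have hc: "h x [^]\<^bsub>G2\<^esub> (i::int) \<in> carrier G2" if "x \<in> carrier G" for x i
    using group.int_pow_closed[OF g2] hom_in_carrier[OF assms(1) that] by blast
  have e1: "fp G (insert y F) c = y [^] c y \<otimes> fp G F c"
    unfolding fp_def by (rule finprod_insert) (use insert.hyps y F in auto)
  have e2: "h (y [^] c y \<otimes> fp G F c) = h (y [^] c y) \<otimes>\<^bsub>G2\<^esub> h (fp G F c)"
    by (rule hom_mult[OF assms(1) int_pow_closed[OF y] fp_closed[OF F]])
  have e3: "h (y [^] c y) = h y [^]\<^bsub>G2\<^esub> c y" by (rule hom_int_pow[OF assms(1) y is_group g2])
  have e4: "finprod G2 (\<lambda>e. h e [^]\<^bsub>G2\<^esub> c e) (insert y F) =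
     h y [^]\<^bsub>G2\<^esub> c y \<otimes>\<^bsub>G2\<^esub> finprod G2 (\<lambda>e. h e [^]\<^bsub>G2\<^esub> c e) F"
    by (rule comm_monoid.finprod_insert[OF comm_group.axioms(1)[OF assms(2)]])
      (use insert.hyps y F hc in auto)
  show ?case using e1 e2 e3 e4 insert.IH[OF F] by simp
qed

lemma Hk_char:
  assumes p: "Factorial_Ring.prime p" and k: "k \<ge> 1"
  shows "sub_not_dvd G (p ^ k) = {x \<in> carrier G. \<exists>q. q > 0 \<and> \<not> p dvd q \<and> x [^] (p ^ (k - 1) * q) = \<one>}"
proof (intro equalityI subsetI)
  fix x assume x: "x \<in> sub_not_dvd G (p ^ k)"
  then obtain m :: nat where xc: "x \<in> carrier G" and m: "m > 0" "x [^] m = \<one>" and nd: "\<not> p ^ k dvd ord x"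
    unfolding sub_not_dvd_def torsion_def by auto
  have "ord x dvd m" using m xc pow_eq_id by blast
  then have o0: "ord x \<noteq> 0" using m by auto
  have nu: "\<not> is_unit p" using p by auto
  obtain y where y: "ord x = p ^ multiplicity p (ord x) * y" "\<not> p dvd y"
    using multiplicity_decompose'[OF o0 nu] by blast
  define j where "j = multiplicity p (ord x)"
  have "j < k"
  proof (rule ccontr)
    assume "\<not> j < k"
    then have "p ^ k dvd p ^ j" by (simp add: le_imp_power_dvd)
    then show False using nd y j_def by (metis dvd_mult2)
  qed
  then have "p ^ j dvd p ^ (k - 1)" by (intro le_imp_power_dvd) simp
  then have "p ^ j * y dvd p ^ (k - 1) * y" by (rule mult_dvd_mono) simp
  then have "ord x dvd p ^ (k - 1) * y" using y j_def by simp
  then have "x [^] (p ^ (k - 1) * y) = \<one>" using pow_eq_id xc by blast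
  moreover have "y > 0" using y o0 by (metis gr0I mult_0_right)
  ultimately show "x \<in> {x \<in> carrier G. \<exists>q. q > 0 \<and> \<not> p dvd q \<and> x [^] (p ^ (k - 1) * q) = \<one>}"
    using xc y by blast
next
  fix x assume "x \<in> {x \<in> carrier G. \<exists>q. q > 0 \<and> \<not> p dvd q \<and> x [^] (p ^ (k - 1) * q) = \<one>}"
  then obtain q where xc: "x \<in> carrier G" and q: "q > 0" "\<not> p dvd q" "x [^] (p ^ (k - 1) * q) = \<one>"
    by blast
  have pp: "p > 0" using p prime_gt_0_nat by blast
  have m: "p ^ (k - 1) * q > 0" using pp q by simp
  have od: "ord x dvd p ^ (k - 1) * q" using q xc pow_eq_id by blast
  have "\<not> p ^ k dvd ord x"
  proof
    assume "p ^ k dvd ord x"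
    moreover have "p ^ k = p ^ (k - 1) * p" using k by (cases k) (auto simp: mult.commute)
    ultimately have "p ^ (k - 1) * p dvd p ^ (k - 1) * q" using od dvd_trans by metis
    moreover have "p ^ (k - 1) > 0" using pp by simp
    ultimately have "p dvd q" using nat_mult_dvd_cancel1 by blast
    then show False using q by blast
  qed
  then show "x \<in> sub_not_dvd G (p ^ k)"
    unfolding sub_not_dvd_def torsion_def using xc m q by blast
qed

lemma Hk_subgroup:
  assumes p: "Factorial_Ring.prime p" and k: "k \<ge> 1"
  shows "subgroup (sub_not_dvd G (p ^ k)) G"
  unfolding Hk_char[OF assms]
proof (rule subgroupI)
  show "{x \<in> carrier G. \<exists>q>0. \<not> p dvd q \<and> x [^] (p ^ (k - 1) * q) = \<one>} \<noteq> {}"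
    using p by (intro ex_in_conv[THEN iffD1] exI[of _ \<one>]) (auto intro!: exI[of _ 1] simp: prime_nat_iff)
next
  fix a assume "a \<in> {x \<in> carrier G. \<exists>q>0. \<not> p dvd q \<and> x [^] (p ^ (k - 1) * q) = \<one>}"
  then obtain q where a: "a \<in> carrier G" "q > 0" "\<not> p dvd q" "a [^] (p ^ (k - 1) * q) = \<one>" by blast
  have "inv a [^] (p ^ (k - 1) * q) = \<one>" using a nat_pow_inv by simp
  then show "inv a \<in> {x \<in> carrier G. \<exists>q>0. \<not> p dvd q \<and> x [^] (p ^ (k - 1) * q) = \<one>}"
    using a by auto
next
  fix a b assume "a \<in> {x \<in> carrier G. \<exists>q>0. \<not> p dvd q \<and> x [^] (p ^ (k - 1) * q) = \<one>}"
    "b \<in> {x \<in> carrier G. \<exists>q>0. \<not> p dvd q \<and> x [^] (p ^ (k - 1) * q) = \<one>}"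
  then obtain q r where a: "a \<in> carrier G" "q > 0" "\<not> p dvd q" "a [^] (p ^ (k - 1) * q) = \<one>"
    and b: "b \<in> carrier G" "r > 0" "\<not> p dvd r" "b [^] (p ^ (k - 1) * r) = \<one>" by blast
  have "a [^] (p ^ (k - 1) * (q * r)) = (a [^] (p ^ (k - 1) * q)) [^] r"
    using nat_pow_pow[OF a(1), of "p ^ (k - 1) * q" r] by (simp add: mult.assoc)
  then have 1: "a [^] (p ^ (k - 1) * (q * r)) = \<one>" using a by simp
  have "b [^] (p ^ (k - 1) * (q * r)) = (b [^] (p ^ (k - 1) * r)) [^] q"
    using nat_pow_pow[OF b(1), of "p ^ (k - 1) * r" q] by (simp add: ac_simps)
  then have 2: "b [^] (p ^ (k - 1) * (q * r)) = \<one>" using b by simp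
  have "(a \<otimes> b) [^] (p ^ (k - 1) * (q * r)) = \<one>"
    using pow_mult_distrib[OF m_comm[OF a(1) b(1)] a(1) b(1)] 1 2 by simp
  moreover have "\<not> p dvd q * r" using a b p by (simp add: prime_dvd_mult_iff)
  moreover have "q * r > 0" using a b by simp
  ultimately show "a \<otimes> b \<in> {x \<in> carrier G. \<exists>q>0. \<not> p dvd q \<and> x [^] (p ^ (k - 1) * q) = \<one>}"
    using a b by blast
qed auto

end

lemma arith1:
  fixes p q n k :: nat and c :: int
  assumes p: "Factorial_Ring.prime p" and k: "1 \<le> k" "k \<le> n" and q: "\<not> p dvd q"
    and d: "int (p ^ n) dvd c * int (p ^ (k - 1) * q)"
  shows "int (p ^ (n + 1 - k)) dvd c"
proof -
  have pn: "p ^ n = p ^ (n + 1 - k) * p ^ (k - 1)" using k by (simp add: power_add[symmetric])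
  have "int (p ^ (n + 1 - k)) * int (p ^ (k - 1)) dvd (c * int q) * int (p ^ (k - 1))"
    using d pn by (simp add: ac_simps)
  moreover have "int (p ^ (k - 1)) \<noteq> 0" using p prime_gt_0_nat by simp
  ultimately have "int (p ^ (n + 1 - k)) dvd c * int q"
    using dvd_mult_cancel_right[of "int (p ^ (n + 1 - k))" "int (p ^ (k - 1))" "c * int q"] by blast
  moreover have "coprime (int (p ^ (n + 1 - k))) (int q)"
  proof -
    have "coprime p q" using prime_imp_coprime[OF p q] .
    then have "coprime (p ^ (n + 1 - k)) q" by simp
    then show ?thesis by simp
  qed
  ultimately show ?thesis using coprime_dvd_mult_left_iff by blast
qed

context comm_group
begin

lemma core1:
  assumes p: "Factorial_Ring.prime p" and k: "1 \<le> k" "k \<le> n" and E: "E \<subseteq> carrier G"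
    and A: "indepH (p ^ n) G E {\<one>}"
  shows "indepH (p ^ (n + 1 - k)) G E (sub_not_dvd G (p ^ k))"
  unfolding indepH_def
proof (intro allI impI ballI)
  fix S c e assume S: "finite S" "S \<subseteq> E" and h: "fp G S c \<in> sub_not_dvd G (p ^ k)" and e: "e \<in> S"
  have Sc: "S \<subseteq> carrier G" using S E by auto
  obtain q where q: "q > 0" "\<not> p dvd q" "fp G S c [^] (p ^ (k - 1) * q) = \<one>"
    using h Hk_char[OF p k(1)] by auto
  define m where "m = p ^ (k - 1) * q"
  have A1: "fp G S c [^] (int m) = fp G S (\<lambda>e. c e * int m)" by (rule fp_ipow[OF Sc])
  have "fp G S c [^] m = \<one>" using q m_def by simp
  then have A2: "fp G S c [^] (int m) = \<one>" by (simp only: int_pow_int)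
  have "fp G S (\<lambda>e. c e * int m) = \<one>" using A1 A2 by metis
  then have "int (p ^ n) dvd c e * int m"
    using A[unfolded indepH_def, rule_format, of S "\<lambda>e. c e * int m"] S e by simp
  then show "int (p ^ (n + 1 - k)) dvd c e" using arith1[OF p k q(2)] m_def by simp
qed

lemma core2:
  assumes p: "Factorial_Ring.prime p" and k: "1 \<le> k" "k \<le> n" and E: "E \<subseteq> carrier G"
    and B: "indepH (p ^ (n + 1 - k)) G E (sub_not_dvd G (p ^ k))"
  shows "indepH (p ^ n) G E {\<one>}"
  unfolding indepH_def
proof (intro allI impI)
  fix S c assume S: "finite S" "S \<subseteq> E" and one: "fp G S c \<in> {\<one>}"
  have Sc: "S \<subseteq> carrier G" using S E by auto
  have pp: "p > 0" using p prime_gt_0_nat by blast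
  have np1: "\<not> p dvd 1" using prime_gt_1_nat[OF p] by simp
  have step: "\<forall>e\<in>S. int p ^ (a + (n + 1 - k)) dvd c e"
    if a: "a \<le> k - 1" and dv: "\<forall>e\<in>S. int p ^ a dvd c e" for a
  proof -
    define d where "d e = c e div int p ^ a" for e
    have cd: "c e = d e * int (p ^ a)" if "e \<in> S" for e
      using dv that d_def by simp
    have "fp G S c = fp G S (\<lambda>e. d e * int (p ^ a))"
      by (rule fp_cong[OF Sc]) (use cd in auto)
    also have "\<dots> = fp G S d [^] int (p ^ a)" using fp_ipow[OF Sc] by simp
    also have "\<dots> = fp G S d [^] (p ^ a)" by (rule int_pow_int)
    finally have x1: "fp G S d [^] (p ^ a) = \<one>" using one by simp
    have "k - 1 = a + (k - 1 - a)" using a by simp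
    then have pk: "p ^ (k - 1) = p ^ a * p ^ (k - 1 - a)" by (metis power_add)
    have "fp G S d [^] (p ^ (k - 1) * 1) = (fp G S d [^] (p ^ a)) [^] (p ^ (k - 1 - a))"
      using nat_pow_pow[OF fp_closed[OF Sc, of d], where n="p ^ a" and m="p ^ (k - 1 - a)"] pk by simp
    then have "fp G S d [^] (p ^ (k - 1) * 1) = \<one>" using x1 by simp
    then have "fp G S d \<in> sub_not_dvd G (p ^ k)"
      using Hk_char[OF p k(1)] fp_closed[OF Sc] np1 by blast
    then have dd: "\<forall>e\<in>S. int (p ^ (n + 1 - k)) dvd d e"
      using B[unfolded indepH_def, rule_format, of S d] S by blast
    show ?thesis
    proof
      fix e assume e: "e \<in> S"
      have "int p ^ (n + 1 - k) * int p ^ a dvd d e * int p ^ a"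
        using dd e by (simp add: mult_dvd_mono)
      then show "int p ^ (a + (n + 1 - k)) dvd c e"
        using cd[OF e] by (simp add: power_add ac_simps)
    qed
  qed
  have all: "a \<le> k - 1 \<Longrightarrow> \<forall>e\<in>S. int p ^ a dvd c e" for a
  proof (induction a)
    case 0
    then show ?case by simp
  next
    case (Suc a)
    then have "\<forall>e\<in>S. int p ^ (a + (n + 1 - k)) dvd c e" using step by simp
    moreover have "int p ^ Suc a dvd int p ^ (a + (n + 1 - k))" using k by (intro le_imp_power_dvd) simp
    ultimately show ?case using dvd_trans by blast
  qed
  have "\<forall>e\<in>S. int p ^ (k - 1 + (n + 1 - k)) dvd c e" using step all by simp
  moreover have "k - 1 + (n + 1 - k) = n" using k by simp
  ultimately show "\<forall>e\<in>S. int (p ^ n) dvd c e" by simp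
qed

lemma inj_from:
  assumes p: "Factorial_Ring.prime p" and k: "1 \<le> k" "k \<le> n" and E: "E \<subseteq> carrier G"
    and H: "subgroup H G" and B: "indepH (p ^ (n + 1 - k)) G E H"
  shows "inj_on (quot_map G H) E"
proof (rule inj_onI, rule ccontr)
  fix e e' assume e: "e \<in> E" "e' \<in> E" and eq: "quot_map G H e = quot_map G H e'" and ne: "e \<noteq> e'"
  have ec: "e \<in> carrier G" "e' \<in> carrier G" using e E by auto
  have "e \<in> H #> e'" using repr_independenceD[OF H ec(1)] eq unfolding quot_map_def by simp
  then have inH: "e \<otimes> inv e' \<in> H" using subgroup.rcos_module_imp[OF H is_group ec(2)] by blast
  define c where "c = (\<lambda>x. if x = e then (1::int) else -1)"
  have "fp G {e, e'} c = e [^] c e \<otimes> e' [^] c e'" using fp_two ec ne by blast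
  also have "e' [^] c e' = inv e'" using ne ec int_pow_neg[OF ec(2), of 1] unfolding c_def by simp
  also have "e [^] c e = e" using ec unfolding c_def by simp
  finally have "fp G {e, e'} c \<in> H" using inH by simp
  then have "int (p ^ (n + 1 - k)) dvd c e"
    using B[unfolded indepH_def, rule_format, of "{e, e'}" c] e by simp
  then have "int (p ^ (n + 1 - k)) dvd int 1" unfolding c_def by simp
  then have "p ^ (n + 1 - k) dvd 1" by (simp only: of_nat_dvd_iff)
  moreover have "p dvd p ^ (n + 1 - k)" using k by (intro dvd_power) auto
  ultimately have "p dvd 1" using dvd_trans by blast
  then show False using prime_gt_1_nat[OF p] by simp
qed

lemma quot_indep:
  assumes H: "subgroup H G" and E: "E \<subseteq> carrier G" and inj: "inj_on (quot_map G H) E"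
  shows "indepH N (G Mod H) (quot_map G H ` E) {\<one>\<^bsub>G Mod H\<^esub>} \<longleftrightarrow> indepH N G E H"
proof -
  define \<pi> where "\<pi> = quot_map G H"
  have nrm: "H \<lhd> G" using subgroup_imp_normal[OF H] .
  have pi: "\<pi> = (\<lambda>a. H #> a)" unfolding \<pi>_def by (rule ext) (simp add: quot_map_def)
  have hom: "\<pi> \<in> hom G (G Mod H)" using normal.r_coset_hom_Mod[OF nrm] pi by simp
  have cg: "comm_group (G Mod H)" using abelian_FactGroup[OF H] .
  have cm: "comm_monoid (G Mod H)" using comm_group.axioms(1)[OF cg] .
  have gm: "group (G Mod H)" using comm_group.axioms(2)[OF cg] .
  have one_iff: "\<pi> z = \<one>\<^bsub>G Mod H\<^esub> \<longleftrightarrow> z \<in> H" if "z \<in> carrier G" for z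
  proof
    assume "\<pi> z = \<one>\<^bsub>G Mod H\<^esub>"
    then have "H #> z = H" using pi by simp
    then show "z \<in> H" using rcos_self[OF that H] by simp
  next
    assume "z \<in> H"
    then show "\<pi> z = \<one>\<^bsub>G Mod H\<^esub>" using coset_join2[OF that H] pi by simp
  qed
  have key: "fp (G Mod H) (\<pi> ` S) c' = \<pi> (fp G S (\<lambda>x. c' (\<pi> x)))" if S: "S \<subseteq> E" for S c'
  proof -
    have Sc: "S \<subseteq> carrier G" using S E by auto
    have "\<pi> (fp G S (\<lambda>x. c' (\<pi> x))) = finprod (G Mod H) (\<lambda>e. \<pi> e [^]\<^bsub>G Mod H\<^esub> c' (\<pi> e)) S"
      using fp_hom[OF hom cg Sc] .
    moreover have "fp (G Mod H) (\<pi> ` S) c' = finprod (G Mod H) (\<lambda>e. \<pi> e [^]\<^bsub>G Mod H\<^esub> c' (\<pi> e)) S"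
      unfolding fp_def
    proof (rule comm_monoid.finprod_reindex[OF cm])
      show "(\<lambda>e. e [^]\<^bsub>G Mod H\<^esub> c' e) \<in> \<pi> ` S \<rightarrow> carrier (G Mod H)"
        using hom_in_carrier[OF hom] Sc group.int_pow_closed[OF gm] by blast
      show "inj_on \<pi> S" using inj S \<pi>_def inj_on_subset by blast
    qed
    ultimately show ?thesis by simp
  qed
  show ?thesis
  proof
    assume Q: "indepH N (G Mod H) (quot_map G H ` E) {\<one>\<^bsub>G Mod H\<^esub>}"
    show "indepH N G E H" unfolding indepH_def
    proof (intro allI impI ballI)
      fix S c e assume S: "finite S" "S \<subseteq> E" and inH: "fp G S c \<in> H" and e: "e \<in> S"
      have Sc: "S \<subseteq> carrier G" using S E by auto
      define c' where "c' y = c (inv_into E \<pi> y)" for y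
      have cc: "c' (\<pi> x) = c x" if "x \<in> S" for x
        using inv_into_f_f[OF inj[folded \<pi>_def]] S that c'_def by auto
      have "fp G S (\<lambda>x. c' (\<pi> x)) = fp G S c" by (rule fp_cong[OF Sc]) (use cc in auto)
      then have "fp (G Mod H) (\<pi> ` S) c' = \<one>\<^bsub>G Mod H\<^esub>"
        using key[OF S(2)] one_iff[OF fp_closed[OF Sc]] inH by simp
      then have "\<forall>y\<in>\<pi> ` S. int N dvd c' y"
        using Q[unfolded indepH_def, rule_format, of "\<pi> ` S" c'] S \<pi>_def by auto
      then show "int N dvd c e" using cc[OF e] e by auto
    qed
  next
    assume A: "indepH N G E H"
    show "indepH N (G Mod H) (quot_map G H ` E) {\<one>\<^bsub>G Mod H\<^esub>}" unfolding indepH_def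
    proof (intro allI impI ballI)
      fix S' c' y assume S': "finite S'" "S' \<subseteq> quot_map G H ` E"
        and one: "fp (G Mod H) S' c' \<in> {\<one>\<^bsub>G Mod H\<^esub>}" and y: "y \<in> S'"
      define S where "S = E \<inter> \<pi> -` S'"
      have SS: "\<pi> ` S = S'" using S' unfolding S_def \<pi>_def by auto
      have SE: "S \<subseteq> E" unfolding S_def by auto
      have Sc: "S \<subseteq> carrier G" using SE E by auto
      have injS: "inj_on \<pi> S" using inj SE \<pi>_def inj_on_subset by blast
      have finS: "finite S" using finite_imageD[of \<pi> S] SS S'(1) injS by simp
      have "\<pi> (fp G S (\<lambda>x. c' (\<pi> x))) = \<one>\<^bsub>G Mod H\<^esub>" using key[OF SE, of c'] SS one by simp
      then have "fp G S (\<lambda>x. c' (\<pi> x)) \<in> H" using one_iff[OF fp_closed[OF Sc]] by simp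
      then have "\<forall>x\<in>S. int N dvd c' (\<pi> x)"
        using A[unfolded indepH_def, rule_format, of S "\<lambda>x. c' (\<pi> x)"] finS SE by blast
      then show "int N dvd c' y" using y SS by auto
    qed
  qed
qed

end

definition gr :: "'a set \<Rightarrow> ('a \<Rightarrow> complex) \<Rightarrow> ('a \<times> complex) set" where
  "gr K f = (\<lambda>x. (x, f x)) ` K"

lemma grmem: "(x, y) \<in> gr K f \<longleftrightarrow> x \<in> K \<and> y = f x"
  unfolding gr_def by auto

lemma grdom: "fst ` gr K f = K"
  unfolding gr_def by force

context comm_group
begin

lemma exists_w:
  assumes K: "subgroup K G" and f: "char_on G K f" and g: "g \<in> carrier G"
  shows "\<exists>w. cmod w = 1 \<and> (\<forall>j::int. g [^] j \<in> K \<longrightarrow> w powi j = f (g [^] j))"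
proof (cases "\<exists>m::nat. m > 0 \<and> g [^] m \<in> K")
  case True
  define m0 where "m0 = (LEAST m::nat. m > 0 \<and> g [^] m \<in> K)"
  have m0: "m0 > 0 \<and> g [^] m0 \<in> K" using LeastI_ex[OF True] m0_def by simp
  have min: "\<not> (m > 0 \<and> g [^] m \<in> K)" if "m < m0" for m :: nat
    using not_less_Least[of m "\<lambda>m. m > 0 \<and> g [^] m \<in> K"] that m0_def by blast
  have "cmod (f (g [^] m0)) = 1" using f m0 unfolding char_on_def by blast
  then obtain w where w: "cmod w = 1" "w ^ m0 = f (g [^] m0)" using complex_root_unit m0 by blast
  have "w powi j = f (g [^] j)" if j: "g [^] j \<in> K" for j :: int
  proof -
    define t where "t = j div int m0"
    define r where "r = j mod int m0"
    have jr: "j = int m0 * t + r" using t_def r_def by simp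
    have r0: "0 \<le> r" "r < int m0" using m0 r_def by simp_all
    have gm': "g [^] (int m0) = g [^] m0" by (rule int_pow_int)
    have gm: "g [^] (int m0) \<in> K" using m0 gm' by simp
    have "(g [^] (int m0)) [^] t \<in> K" using subgroup_int_pow_closed[OF K gm] .
    then have gmt: "g [^] (int m0 * t) \<in> K" using int_pow_pow[OF g] by simp
    have "g [^] j = g [^] (int m0 * t) \<otimes> g [^] r" using jr int_pow_mult[OF g] by simp
    then have "g [^] r = inv (g [^] (int m0 * t)) \<otimes> g [^] j"
      using inv_solve_left[of "g [^] r" "g [^] (int m0 * t)" "g [^] j"] g by simp
    then have grK: "g [^] r \<in> K"
      using subgroup.m_closed[OF K] subgroup.m_inv_closed[OF K gmt] j by simp
    have "r = 0"
    proof (rule ccontr)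
      assume "r \<noteq> 0"
      then have "nat r > 0" "nat r < m0" using r0 by auto
      moreover have "g [^] (nat r) \<in> K" using grK r0 int_pow_int[where x=g and n="nat r"] by simp
      ultimately show False using min by blast
    qed
    then have jt: "j = int m0 * t" using jr by simp
    have "w powi j = (w powi int m0) powi t" unfolding jt by (rule power_int_mult)
    also have "\<dots> = f (g [^] (int m0)) powi t" using w(2) gm' by simp
    also have "\<dots> = f ((g [^] (int m0)) [^] t)" using char_on_ipow[OF K f gm] by simp
    also have "\<dots> = f (g [^] j)" using int_pow_pow[OF g] jt by simp
    finally show ?thesis .
  qed
  then show ?thesis using w(1) by blast
next
  case False
  have "1 powi j = f (g [^] j)" if j: "g [^] j \<in> K" for j :: int
  proof -
    have "j = 0"
    proof (rule ccontr)
      assume "j \<noteq> 0"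
      then consider "j > 0" | "j < 0" by linarith
      then show False
      proof cases
        case 1
        then have "g [^] (nat j) \<in> K" using j int_pow_int[where x=g and n="nat j"] by simp
        moreover have "nat j > 0" using 1 by simp
        ultimately show False using False by blast
      next
        case 2
        have "g [^] (-j) \<in> K" using int_pow_neg[OF g, of j] subgroup.m_inv_closed[OF K j] by simp
        then have "g [^] (nat (-j)) \<in> K" using 2 int_pow_int[where x=g and n="nat (-j)"] by simp
        moreover have "nat (-j) > 0" using 2 by simp
        ultimately show False using False by blast
      qed
    qed
    then show ?thesis using char_on_one[OF K f] by simp
  qed
  then show ?thesis by (intro exI[of _ 1]) simp
qed

lemma char_step:
  assumes K: "subgroup K G" and f: "char_on G K f" and g: "g \<in> carrier G"
  shows "\<exists>K' f'. subgroup K' G \<and> K \<subseteq> K' \<and> g \<in> K' \<and> char_on G K' f' \<and> (\<forall>x\<in>K. f' x = f x)"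
proof -
  obtain w where w: "cmod w = 1" and compat: "\<And>j::int. g [^] j \<in> K \<Longrightarrow> w powi j = f (g [^] j)"
    using exists_w[OF K f g] by blast
  have w0: "w \<noteq> 0" using w by auto
  have Kc: "K \<subseteq> carrier G" using subgroup.subset[OF K] .
  define K' where "K' = {x. \<exists>k\<in>K. \<exists>j::int. x = k \<otimes> g [^] j}"
  have wd: "f k * w powi j = f k' * w powi j'"
    if kk: "k \<in> K" "k' \<in> K" "k \<otimes> g [^] j = k' \<otimes> g [^] j'" for k k' j j'
  proof -
    have kc: "k \<in> carrier G" "k' \<in> carrier G" using kk Kc by auto
    define u where "u = g [^] (j - j')"
    have uc: "u \<in> carrier G" using g u_def by simp
    have "g [^] j = u \<otimes> g [^] j'" using int_pow_mult[OF g, of "j - j'" j'] u_def by simp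
    then have "k \<otimes> u \<otimes> g [^] j' = k' \<otimes> g [^] j'" using kk(3) kc uc g by (simp add: m_assoc)
    then have ku: "k \<otimes> u = k'" using kc uc g by simp
    have "u = inv k \<otimes> k'" using inv_solve_left[OF uc kc(1) kc(2)] ku by simp
    then have uK: "u \<in> K" using kk subgroup.m_closed[OF K] subgroup.m_inv_closed[OF K] by simp
    have "f k' = f k * f u" using f ku uK kk unfolding char_on_def by metis
    moreover have "f u = w powi (j - j')" using compat uK u_def by simp
    ultimately have "f k' * w powi j' = f k * (w powi (j - j') * w powi j')" by (simp add: ac_simps)
    also have "w powi (j - j') * w powi j' = w powi j" using w0 power_int_add[of w "j - j'" j'] by simp
    finally show ?thesis by simp
  qed
  define f' where "f' x = (SOME z. \<exists>k\<in>K. \<exists>j::int. x = k \<otimes> g [^] j \<and> z = f k * w powi j)" for x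
  have f'v: "f' (k \<otimes> g [^] j) = f k * w powi j" if "k \<in> K" for k j
  proof -
    have "\<exists>z. \<exists>k'\<in>K. \<exists>j'::int. k \<otimes> g [^] j = k' \<otimes> g [^] j' \<and> z = f k' * w powi j'"
      using that by blast
    then have "\<exists>k'\<in>K. \<exists>j'::int. k \<otimes> g [^] j = k' \<otimes> g [^] j' \<and> f' (k \<otimes> g [^] j) = f k' * w powi j'"
      unfolding f'_def by (rule someI_ex)
    then show ?thesis using wd that by metis
  qed
  have K'sub: "subgroup K' G"
  proof (rule subgroupI)
    show "K' \<subseteq> carrier G" using Kc g unfolding K'_def by auto
    have "\<one> \<otimes> g [^] (0::int) \<in> K'" unfolding K'_def using subgroup.one_closed[OF K] by blast
    then show "K' \<noteq> {}" by blast
  next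
    fix a assume "a \<in> K'"
    then obtain k j where a: "k \<in> K" "a = k \<otimes> g [^] (j::int)" unfolding K'_def by blast
    have "inv a = inv k \<otimes> g [^] (-j)" using a Kc g inv_mult int_pow_neg by auto
    then show "inv a \<in> K'" unfolding K'_def using subgroup.m_inv_closed[OF K a(1)] by blast
  next
    fix a b assume "a \<in> K'" "b \<in> K'"
    then obtain k j k' j' where a: "k \<in> K" "a = k \<otimes> g [^] (j::int)"
      and b: "k' \<in> K" "b = k' \<otimes> g [^] (j'::int)" unfolding K'_def by blast
    have "a \<otimes> b = (k \<otimes> k') \<otimes> g [^] (j + j')" proof -
      have c: "k \<in> carrier G" "k' \<in> carrier G" "g [^] j \<in> carrier G" "g [^] j' \<in> carrier G"
        using a b Kc g by auto
      show ?thesis using a b c g by (simp add: int_pow_mult m_ac)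
    qed
    then show "a \<otimes> b \<in> K'" unfolding K'_def using subgroup.m_closed[OF K a(1) b(1)] by blast
  qed
  have kg0: "k \<otimes> g [^] (0::int) = k" if "k \<in> K" for k using that Kc by auto
  have KK': "K \<subseteq> K'"
  proof
    fix k assume "k \<in> K"
    then have "k \<otimes> g [^] (0::int) \<in> K'" unfolding K'_def by blast
    then show "k \<in> K'" using kg0 \<open>k \<in> K\<close> by simp
  qed
  have gK': "g \<in> K'"
  proof -
    have "\<one> \<otimes> g [^] (1::int) \<in> K'" unfolding K'_def using subgroup.one_closed[OF K] by blast
    then show ?thesis using g by simp
  qed
  have ch: "char_on G K' f'" unfolding char_on_def
  proof (intro conjI ballI)
    fix x assume "x \<in> K'"
    then obtain k j where kj: "k \<in> K" "x = k \<otimes> g [^] (j::int)" unfolding K'_def by blast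
    have "cmod (f k) = 1" using f kj unfolding char_on_def by blast
    then show "cmod (f' x) = 1" using f'v[OF kj(1)] kj w by (simp add: norm_mult norm_power_int)
  next
    fix x y assume "x \<in> K'" "y \<in> K'"
    then obtain k j k' j' where a: "k \<in> K" "x = k \<otimes> g [^] (j::int)"
      and b: "k' \<in> K" "y = k' \<otimes> g [^] (j'::int)" unfolding K'_def by blast
    have "x \<otimes> y = (k \<otimes> k') \<otimes> g [^] (j + j')" proof -
      have c: "k \<in> carrier G" "k' \<in> carrier G" "g [^] j \<in> carrier G" "g [^] j' \<in> carrier G"
        using a b Kc g by auto
      show ?thesis using a b c g by (simp add: int_pow_mult m_ac)
    qed
    moreover have "k \<otimes> k' \<in> K" using subgroup.m_closed[OF K a(1) b(1)] .
    moreover have "f (k \<otimes> k') = f k * f k'" using f a b unfolding char_on_def by blast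
    moreover have "w powi (j + j') = w powi j * w powi j'" using w0 power_int_add by blast
    ultimately show "f' (x \<otimes> y) = f' x * f' y" using f'v a b by (simp add: ac_simps)
  qed
  have ext: "\<forall>x\<in>K. f' x = f x"
  proof
    fix x assume "x \<in> K"
    then show "f' x = f x" using f'v[of x 0] kg0 by simp
  qed
  show ?thesis using K'sub KK' gK' ch ext by blast
qed

end

context comm_group
begin

lemma char_extend:
  assumes K0: "subgroup K0 G" and f0: "char_on G K0 f0"
  shows "\<exists>f. char_on G (carrier G) f \<and> (\<forall>x\<in>K0. f x = f0 x)"
proof -
  define P where "P K f \<longleftrightarrow> subgroup K G \<and> K0 \<subseteq> K \<and> char_on G K f \<and> (\<forall>x\<in>K0. f x = f0 x)"
    for K f
  define AA where "AA = {R. \<exists>K f. R = gr K f \<and> P K f}"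
  have "\<exists>M\<in>AA. \<forall>Z\<in>AA. M \<subseteq> Z \<longrightarrow> Z = M"
  proof (rule subset_Zorn_nonempty)
    have "P K0 f0" unfolding P_def using K0 f0 by blast
    then have "gr K0 f0 \<in> AA" unfolding AA_def by blast
    then show "AA \<noteq> {}" by blast
  next
    fix C assume C: "C \<noteq> {}" "subset.chain AA C"
    have CA: "C \<subseteq> AA" and tot: "\<And>Z W. Z \<in> C \<Longrightarrow> W \<in> C \<Longrightarrow> Z \<subseteq> W \<or> W \<subseteq> Z"
      using C(2) unfolding subset_chain_def by auto
    have rep: "\<exists>K1 f1. R = gr K1 f1 \<and> P K1 f1" if hyp: "R \<in> C" for R
      using hyp CA unfolding AA_def by blast
    have func: "y = y'" if hyp: "(x, y) \<in> \<Union>C" "(x, y') \<in> \<Union>C" for x y y'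
    proof -
      obtain R1 R2 where R: "R1 \<in> C" "R2 \<in> C" "(x, y) \<in> R1" "(x, y') \<in> R2" using hyp by blast
      then obtain R where R': "R \<in> C" "(x, y) \<in> R" "(x, y') \<in> R" using tot[OF R(1,2)] by blast
      then obtain K1 f1 where "R = gr K1 f1" using rep by blast
      then show ?thesis using R' grmem by metis
    qed
    define K where "K = fst ` \<Union>C"
    define f where "f x = (SOME y. (x, y) \<in> \<Union>C)" for x
    have fv: "f x = y" if hyp: "(x, y) \<in> \<Union>C" for x y
    proof -
      have "(x, f x) \<in> \<Union>C" unfolding f_def using hyp by (rule someI)
      then show ?thesis using func hyp by blast
    qed
    have a: "x \<in> K \<and> f x = f1 x" if hyp: "gr K1 f1 \<in> C" "x \<in> K1" for x K1 f1
    proof -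
      have "(x, f1 x) \<in> gr K1 f1" using hyp(2) by (simp add: grmem)
      then have m: "(x, f1 x) \<in> \<Union>C" using hyp(1) by blast
      then have "x \<in> K" unfolding K_def by (metis fst_conv image_eqI)
      then show ?thesis using fv[OF m] by simp
    qed
    have b: "\<exists>K1 f1. gr K1 f1 \<in> C \<and> P K1 f1 \<and> x \<in> K1" if hyp: "x \<in> K" for x
    proof -
      obtain y R where R: "R \<in> C" "(x, y) \<in> R" using hyp unfolding K_def by force
      obtain K1 f1 where "R = gr K1 f1" "P K1 f1" using rep[OF R(1)] by blast
      then show ?thesis using R by (auto simp: grmem)
    qed
    have c: "\<exists>K1 f1. gr K1 f1 \<in> C \<and> P K1 f1 \<and> x \<in> K1 \<and> y \<in> K1" if hyp: "x \<in> K" "y \<in> K" for x y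
    proof -
      obtain K1 f1 where 1: "gr K1 f1 \<in> C" "P K1 f1" "x \<in> K1" using b[OF hyp(1)] by blast
      obtain K2 f2 where 2: "gr K2 f2 \<in> C" "P K2 f2" "y \<in> K2" using b[OF hyp(2)] by blast
      have "gr K1 f1 \<subseteq> gr K2 f2 \<or> gr K2 f2 \<subseteq> gr K1 f1" using tot 1 2 by blast
      then have "fst ` gr K1 f1 \<subseteq> fst ` gr K2 f2 \<or> fst ` gr K2 f2 \<subseteq> fst ` gr K1 f1"
        by (meson image_mono)
      then have "K1 \<subseteq> K2 \<or> K2 \<subseteq> K1" by (simp only: grdom)
      then show ?thesis using 1 2 by blast
    qed
    have UC: "\<Union>C = gr K f"
    proof
      show "\<Union>C \<subseteq> gr K f"
      proof
        fix z assume z: "z \<in> \<Union>C"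
        obtain x y where xy: "z = (x, y)" by (cases z)
        have "x \<in> K" unfolding K_def using z xy by force
        moreover have "y = f x" using fv z xy by simp
        ultimately show "z \<in> gr K f" using xy by (simp add: grmem)
      qed
    next
      show "gr K f \<subseteq> \<Union>C"
      proof
        fix z assume "z \<in> gr K f"
        then obtain x where x: "x \<in> K" "z = (x, f x)" unfolding gr_def by blast
        then obtain y where "(x, y) \<in> \<Union>C" unfolding K_def by force
        then show "z \<in> \<Union>C" using fv x by simp
      qed
    qed
    have PK: "P K f" unfolding P_def
    proof (intro conjI)
      show "subgroup K G"
      proof (rule subgroupI)
        show "K \<subseteq> carrier G"
        proof
          fix x assume "x \<in> K"
          then obtain K1 f1 where "P K1 f1" "x \<in> K1" using b by blast
          then have "subgroup K1 G" unfolding P_def by blast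
          then show "x \<in> carrier G" using subgroup.mem_carrier \<open>x \<in> K1\<close> by metis
        qed
        obtain R where "R \<in> C" using C(1) by blast
        then obtain K1 f1 where R: "gr K1 f1 \<in> C" "P K1 f1" using rep by blast
        then have "subgroup K1 G" unfolding P_def by blast
        then have "\<one> \<in> K1" using subgroup.one_closed by metis
        then show "K \<noteq> {}" using a R by blast
      next
        fix x assume "x \<in> K"
        then obtain K1 f1 where 1: "gr K1 f1 \<in> C" "P K1 f1" "x \<in> K1" using b by blast
        then have "subgroup K1 G" unfolding P_def by blast
        then have "inv x \<in> K1" using subgroup.m_inv_closed 1(3) by metis
        then show "inv x \<in> K" using a 1 by blast
      next
        fix x y assume "x \<in> K" "y \<in> K"
        then obtain K1 f1 where 1: "gr K1 f1 \<in> C" "P K1 f1" "x \<in> K1" "y \<in> K1" using c by blast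
        then have "subgroup K1 G" unfolding P_def by blast
        then have "x \<otimes> y \<in> K1" using subgroup.m_closed 1(3,4) by metis
        then show "x \<otimes> y \<in> K" using a 1 by blast
      qed
    next
      obtain R where "R \<in> C" using C(1) by blast
      then obtain K1 f1 where R: "gr K1 f1 \<in> C" "P K1 f1" using rep by blast
      show "K0 \<subseteq> K" using a R unfolding P_def by blast
      show "\<forall>x\<in>K0. f x = f0 x" using a R unfolding P_def by (metis subsetD)
    next
      show "char_on G K f" unfolding char_on_def
      proof (intro conjI ballI)
        fix x assume "x \<in> K"
        then obtain K1 f1 where 1: "gr K1 f1 \<in> C" "P K1 f1" "x \<in> K1" using b by blast
        then have "cmod (f1 x) = 1" unfolding P_def char_on_def by blast
        then show "cmod (f x) = 1" using a 1 by metis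
      next
        fix x y assume "x \<in> K" "y \<in> K"
        then obtain K1 f1 where 1: "gr K1 f1 \<in> C" "P K1 f1" "x \<in> K1" "y \<in> K1" using c by blast
        then have "subgroup K1 G" unfolding P_def by blast
        then have "x \<otimes> y \<in> K1" using subgroup.m_closed 1(3,4) by metis
        moreover have "f1 (x \<otimes> y) = f1 x * f1 y" using 1 unfolding P_def char_on_def by blast
        ultimately show "f (x \<otimes> y) = f x * f y" using a 1 by metis
      qed
    qed
    show "\<Union>C \<in> AA" unfolding AA_def using UC PK by blast
  qed
  then obtain M where M: "M \<in> AA" and max: "\<And>Z. Z \<in> AA \<Longrightarrow> M \<subseteq> Z \<Longrightarrow> Z = M" by blast
  obtain K f where Kf: "M = gr K f" "P K f" using M unfolding AA_def by blast
  have "K = carrier G"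
  proof (rule ccontr)
    assume ne: "K \<noteq> carrier G"
    have "subgroup K G" using Kf unfolding P_def by blast
    then have "K \<subseteq> carrier G" using subgroup.subset by metis
    then obtain g where g: "g \<in> carrier G" "g \<notin> K" using ne by blast
    have sK: "subgroup K G" and cK: "char_on G K f" using Kf unfolding P_def by auto
    obtain K' f' where K': "subgroup K' G" "K \<subseteq> K'" "g \<in> K'" "char_on G K' f'" "\<forall>x\<in>K. f' x = f x"
      using char_step[OF sK cK g(1)] by blast
    have "P K' f'" using K' Kf unfolding P_def by auto
    then have A': "gr K' f' \<in> AA" unfolding AA_def by blast
    have "gr K f \<subseteq> gr K' f'" using K' unfolding gr_def by force
    then have "gr K' f' = gr K f" using max[OF A'] Kf by simp
    then have "K' = K" using grdom by metis
    then show False using g K' by blast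
  qed
  then show ?thesis using Kf unfolding P_def by blast
qed

end

context comm_group
begin

lemma PR_imp_indep:
  assumes N: "N > 0" and E: "E \<subseteq> carrier G" and PR: "PR N G E"
  shows "indepH N G E {\<one>}"
  unfolding indepH_def
proof (intro allI impI ballI)
  fix S c e0 assume S: "finite S" "S \<subseteq> E" and one: "fp G S c \<in> {\<one>}" and e0: "e0 \<in> S"
  show "int N dvd c e0"
  proof (rule ccontr)
    assume nd: "\<not> int N dvd c e0"
    define \<omega> where "\<omega> = cis (2 * pi / real N)"
    have "\<omega> ^ N = cis (real N * (2 * pi / real N))" unfolding \<omega>_def by (rule DeMoivre)
    also have "real N * (2 * pi / real N) = 2 * pi" using N by simp
    finally have \<omega>N: "\<omega> ^ N = 1" by simp
    define \<phi> where "\<phi> e = (if e = e0 then \<omega> else 1)" for e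
    have "\<phi> \<in> E \<rightarrow> roots_of_unity N" unfolding roots_of_unity_def \<phi>_def using \<omega>N by auto
    then obtain \<chi> where \<chi>: "character G \<chi>" "\<forall>\<gamma>\<in>E. \<chi> \<gamma> = \<phi> \<gamma>" using PR unfolding PR_def by blast
    have ch: "char_on G (carrier G) \<chi>" using \<chi>(1) character_char_on by blast
    have sg: "subgroup (carrier G) G" by (rule subgroup_self)
    have Sc: "S \<subseteq> carrier G" using S E by auto
    have "\<chi> (fp G S c) = (\<Prod>e\<in>S. \<chi> (e [^] c e))"
      using char_on_finprod[OF sg ch, of "\<lambda>e. e [^] c e" S] Sc unfolding fp_def by auto
    also have "\<dots> = (\<Prod>e\<in>S. \<phi> e powi c e)"
    proof (rule prod.cong)
      fix e
      assume e: "e \<in> S"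
      have ec: "e \<in> carrier G" using e Sc by auto
      have "\<chi> (e [^] c e) = \<chi> e powi c e" using char_on_ipow[OF sg ch ec] .
      moreover have "\<chi> e = \<phi> e" using \<chi>(2) S e by auto
      ultimately show "\<chi> (e [^] c e) = \<phi> e powi c e" by simp
    qed simp
    also have "\<dots> = (\<Prod>e\<in>S. if e = e0 then \<omega> powi c e0 else 1)"
      by (rule prod.cong) (auto simp: \<phi>_def)
    also have "\<dots> = \<omega> powi c e0" using S(1) e0 by simp
    finally have "\<omega> powi c e0 = 1" using one char_on_one[OF sg ch] by simp
    then have "cis (of_int (c e0) * (2 * pi / real N)) = 1" unfolding \<omega>_def by (simp add: cis_power_int)
    then have "Re (cis (of_int (c e0) * (2 * pi / real N))) = Re 1" by simp
    then have "cos (of_int (c e0) * (2 * pi / real N)) = 1" by simp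
    then obtain j :: int where j: "of_int (c e0) * (2 * pi / real N) = of_int j * 2 * pi"
      using cos_one_2pi_int by blast
    have "real_of_int (c e0) = real_of_int j * real N"
    proof -
      have "of_int (c e0) * (2 * pi / real N) * real N = of_int j * 2 * pi * real N" using j by simp
      then have "of_int (c e0) * (2 * pi) = of_int j * real N * (2 * pi)" using N by (simp add: field_simps)
      then show ?thesis by simp
    qed
    then have "real_of_int (c e0) = real_of_int (j * int N)" by simp
    then have "c e0 = j * int N" by (simp only: of_int_eq_iff)
    then show False using nd by simp
  qed
qed

lemma indep_imp_PR:
  assumes N: "N > 0" and E: "E \<subseteq> carrier G" and I: "indepH N G E {\<one>}"
  shows "PR N G E"
  unfolding PR_def
proof
  fix \<phi> assume \<phi>: "\<phi> \<in> E \<rightarrow> roots_of_unity N"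
  have \<phi>N: "\<phi> e ^ N = 1" if h: "e \<in> E" for e using \<phi> h unfolding roots_of_unity_def by auto
  have \<phi>0: "\<phi> e \<noteq> 0" if h: "e \<in> E" for e
  proof
    assume "\<phi> e = 0"
    then show False using \<phi>N[OF h] N by (auto simp: power_0_left)
  qed
  have \<phi>n: "cmod (\<phi> e) = 1" if h: "e \<in> E" for e
  proof -
    have "cmod (\<phi> e) ^ N = 1 ^ N" using \<phi>N[OF h] by (metis norm_power norm_one power_one)
    from power_eq_imp_eq_base[OF this norm_ge_zero _ N] show ?thesis by simp
  qed
  have \<phi>pow: "\<phi> e powi a = \<phi> e powi b" if h: "e \<in> E" "int N dvd a - b" for e a b
  proof -
    obtain t where t: "a - b = int N * t" using h(2) by blast
    have "\<phi> e powi a = \<phi> e powi (b + int N * t)" using t by (simp add: algebra_simps)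
    also have "\<dots> = \<phi> e powi b * \<phi> e powi (int N * t)" using \<phi>0[OF h(1)] by (simp add: power_int_add)
    also have "\<phi> e powi (int N * t) = (\<phi> e powi int N) powi t" by (rule power_int_mult)
    also have "\<dots> = 1" using \<phi>N[OF h(1)] by simp
    finally show ?thesis by simp
  qed
  define val where "val S c = (\<Prod>e\<in>S. \<phi> e powi c e)" for S c
  have val_ext: "val S c = val U (\<lambda>e. if e \<in> S then c e else 0)" if h: "finite U" "S \<subseteq> U" for S U c
    unfolding val_def by (rule prod.mono_neutral_cong_left) (use h in auto)
  have fp_ext: "fp G S c = fp G U (\<lambda>e. if e \<in> S then c e else 0)"
    if h: "finite U" "S \<subseteq> U" "U \<subseteq> E" for S U c
    using fp_extend[of U S c] h E by auto
  have wd: "val S c = val T d"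
    if h: "finite S" "S \<subseteq> E" "finite T" "T \<subseteq> E" "fp G S c = fp G T d" for S c T d
  proof -
    define U where "U = S \<union> T"
    define c' where "c' e = (if e \<in> S then c e else 0)" for e
    define d' where "d' e = (if e \<in> T then d e else 0)" for e
    have U: "finite U" "U \<subseteq> E" "S \<subseteq> U" "T \<subseteq> U" using h unfolding U_def by auto
    have Uc: "U \<subseteq> carrier G" using U E by auto
    have e1: "fp G U c' = fp G U d'" using h(5) fp_ext[OF U(1) U(3) U(2), of c] fp_ext[OF U(1) U(4) U(2), of d]
      unfolding c'_def d'_def by simp
    have "fp G U (\<lambda>e. c' e + - d' e) = fp G U c' \<otimes> fp G U (\<lambda>e. - d' e)" using fp_add[OF Uc] .
    also have "\<dots> = fp G U c' \<otimes> inv (fp G U d')" using fp_neg[OF Uc] by simp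
    also have "\<dots> = \<one>" using e1 fp_closed[OF Uc] by simp
    finally have "fp G U (\<lambda>e. c' e + - d' e) \<in> {\<one>}" by simp
    then have dv: "\<forall>e\<in>U. int N dvd c' e + - d' e"
      using I[unfolded indepH_def, rule_format, of U "\<lambda>e. c' e + - d' e"] U by blast
    have "val U c' = val U d'" unfolding val_def
    proof (rule prod.cong)
      fix e assume "e \<in> U"
      then show "\<phi> e powi c' e = \<phi> e powi d' e" using \<phi>pow[of e "c' e" "d' e"] dv U by auto
    qed simp
    then show ?thesis using val_ext[OF U(1) U(3), of c] val_ext[OF U(1) U(4), of d]
      unfolding c'_def d'_def by simp
  qed
  define Sp where "Sp = {x. \<exists>S c. finite S \<and> S \<subseteq> E \<and> x = fp G S c}"
  define \<chi>0 where "\<chi>0 x = (SOME z. \<exists>S c. finite S \<and> S \<subseteq> E \<and> x = fp G S c \<and> z = val S c)" for x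
  have \<chi>v: "\<chi>0 (fp G S c) = val S c" if h: "finite S" "S \<subseteq> E" for S c
  proof -
    have "\<exists>z. \<exists>S' c'. finite S' \<and> S' \<subseteq> E \<and> fp G S c = fp G S' c' \<and> z = val S' c'"
      using h by blast
    then have "\<exists>S' c'. finite S' \<and> S' \<subseteq> E \<and> fp G S c = fp G S' c' \<and> \<chi>0 (fp G S c) = val S' c'"
      unfolding \<chi>0_def by (rule someI_ex)
    then show ?thesis using wd h by metis
  qed
  have mulrep: "\<exists>U c''. finite U \<and> U \<subseteq> E \<and> fp G S c \<otimes> fp G T d = fp G U c'' \<and>
       val U c'' = val S c * val T d"
    if h: "finite S" "S \<subseteq> E" "finite T" "T \<subseteq> E" for S c T d
  proof -
    define U where "U = S \<union> T"
    define c' where "c' e = (if e \<in> S then c e else 0)" for e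
    define d' where "d' e = (if e \<in> T then d e else 0)" for e
    have U: "finite U" "U \<subseteq> E" "S \<subseteq> U" "T \<subseteq> U" using h unfolding U_def by auto
    have Uc: "U \<subseteq> carrier G" using U E by auto
    have "fp G S c \<otimes> fp G T d = fp G U c' \<otimes> fp G U d'"
      using fp_ext[OF U(1) U(3) U(2), of c] fp_ext[OF U(1) U(4) U(2), of d]
      unfolding c'_def d'_def by simp
    also have "\<dots> = fp G U (\<lambda>e. c' e + d' e)" using fp_add[OF Uc] by simp
    finally have 1: "fp G S c \<otimes> fp G T d = fp G U (\<lambda>e. c' e + d' e)" .
    have "val U (\<lambda>e. c' e + d' e) = val U c' * val U d'" unfolding val_def
      by (subst prod.distrib[symmetric], rule prod.cong) (use \<phi>0 U in \<open>auto simp: power_int_add\<close>)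
    also have "\<dots> = val S c * val T d" using val_ext[OF U(1) U(3), of c] val_ext[OF U(1) U(4), of d]
      unfolding c'_def d'_def by simp
    finally show ?thesis using 1 U by blast
  qed
  have spsub: "subgroup Sp G"
  proof (rule subgroupI)
    show "Sp \<subseteq> carrier G" unfolding Sp_def using E fp_closed by blast
    have "fp G {} (\<lambda>e. 0) \<in> Sp" unfolding Sp_def by blast
    then show "Sp \<noteq> {}" by blast
  next
    fix a assume "a \<in> Sp"
    then obtain S c where a: "finite S" "S \<subseteq> E" "a = fp G S c" unfolding Sp_def by blast
    then have "inv a = fp G S (\<lambda>e. - c e)" using fp_neg E by auto
    then show "inv a \<in> Sp" unfolding Sp_def using a by blast
  next
    fix a b assume "a \<in> Sp" "b \<in> Sp"
    then obtain S c T d where a: "finite S" "S \<subseteq> E" "a = fp G S c"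
      and b: "finite T" "T \<subseteq> E" "b = fp G T d" unfolding Sp_def by blast
    then show "a \<otimes> b \<in> Sp" using mulrep[OF a(1,2) b(1,2), of c d] unfolding Sp_def by auto
  qed
  have ch0: "char_on G Sp \<chi>0" unfolding char_on_def
  proof (intro conjI ballI)
    fix x assume "x \<in> Sp"
    then obtain S c where a: "finite S" "S \<subseteq> E" "x = fp G S c" unfolding Sp_def by blast
    have "cmod (val S c) = (\<Prod>e\<in>S. cmod (\<phi> e) powi c e)"
      unfolding val_def by (simp add: prod_norm[symmetric] norm_power_int)
    also have "\<dots> = 1" using \<phi>n a by (intro prod.neutral) auto
    finally show "cmod (\<chi>0 x) = 1" using \<chi>v a by simp
  next
    fix x y assume "x \<in> Sp" "y \<in> Sp"
    then obtain S c T d where a: "finite S" "S \<subseteq> E" "x = fp G S c"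
      and b: "finite T" "T \<subseteq> E" "y = fp G T d" unfolding Sp_def by blast
    obtain U c'' where U: "finite U" "U \<subseteq> E" "fp G S c \<otimes> fp G T d = fp G U c''"
      "val U c'' = val S c * val T d" using mulrep[OF a(1,2) b(1,2), of c d] by blast
    show "\<chi>0 (x \<otimes> y) = \<chi>0 x * \<chi>0 y" using U a b \<chi>v by simp
  qed
  have \<chi>E: "e \<in> Sp \<and> \<chi>0 e = \<phi> e" if h: "e \<in> E" for e
  proof -
    have ec: "e \<in> carrier G" using h E by auto
    have "fp G {e} (\<lambda>_. 1) = e" using fp_single[OF ec] ec by simp
    moreover have "val {e} (\<lambda>_. 1) = \<phi> e" unfolding val_def by simp
    moreover have "fp G {e} (\<lambda>_. 1) \<in> Sp" unfolding Sp_def using h by blast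
    ultimately show ?thesis using \<chi>v[of "{e}" "\<lambda>_. 1"] h by auto
  qed
  obtain f where f: "char_on G (carrier G) f" "\<forall>x\<in>Sp. f x = \<chi>0 x"
    using char_extend[OF spsub ch0] by blast
  show "\<exists>\<chi>. character G \<chi> \<and> (\<forall>\<gamma>\<in>E. \<chi> \<gamma> = \<phi> \<gamma>)"
    using f \<chi>E character_char_on by metis
qed

lemma PR_iff:
  assumes "N > 0" "E \<subseteq> carrier G"
  shows "PR N G E \<longleftrightarrow> indepH N G E {\<one>}"
  using PR_imp_indep indep_imp_PR assms by blast

end

theorem proposition3p2:
  fixes \<Gamma> :: "('a, 'b) monoid_scheme" and E :: "'a set" and n p :: nat
  assumes "comm_group \<Gamma>"
    and "E \<subseteq> carrier \<Gamma>"
    and "n \<ge> 1"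
    and "Factorial_Ring.prime p"
  shows "(PR (p ^ n) \<Gamma> E \<longleftrightarrow>
           (\<forall>k \<in> {1..n}. inj_on (quot_map \<Gamma> (sub_not_dvd \<Gamma> (p ^ k))) E \<and>
              PR (p ^ (n + 1 - k)) (\<Gamma> Mod (sub_not_dvd \<Gamma> (p ^ k)))
                 (quot_map \<Gamma> (sub_not_dvd \<Gamma> (p ^ k)) ` E)))
       \<and> (PR (p ^ n) \<Gamma> E \<longleftrightarrow>
           (\<exists>k \<in> {1..n}. inj_on (quot_map \<Gamma> (sub_not_dvd \<Gamma> (p ^ k))) E \<and>
              PR (p ^ (n + 1 - k)) (\<Gamma> Mod (sub_not_dvd \<Gamma> (p ^ k)))
                 (quot_map \<Gamma> (sub_not_dvd \<Gamma> (p ^ k)) ` E)))"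
proof -
  interpret comm_group \<Gamma> by (rule assms(1))
  have p: "Factorial_Ring.prime p" by (rule assms(4))
  have pp: "p > 0" using p prime_gt_0_nat by blast
  have E: "E \<subseteq> carrier \<Gamma>" by (rule assms(2))
  have per_k: "PR (p ^ n) \<Gamma> E \<longleftrightarrow>
      (inj_on (quot_map \<Gamma> (sub_not_dvd \<Gamma> (p ^ k))) E \<and>
       PR (p ^ (n + 1 - k)) (\<Gamma> Mod (sub_not_dvd \<Gamma> (p ^ k))) (quot_map \<Gamma> (sub_not_dvd \<Gamma> (p ^ k)) ` E))"
    if kk: "k \<in> {1..n}" for k
  proof -
    have k: "1 \<le> k" "k \<le> n" using kk by auto
    define H where "H = sub_not_dvd \<Gamma> (p ^ k)"
    have H: "subgroup H \<Gamma>" unfolding H_def using Hk_subgroup[OF p k(1)] .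
    have cg: "comm_group (\<Gamma> Mod H)" using abelian_FactGroup[OF H] .
    have Ec: "quot_map \<Gamma> H ` E \<subseteq> carrier (\<Gamma> Mod H)"
      using E unfolding carrier_FactGroup quot_map_def by auto
    have "PR (p ^ n) \<Gamma> E \<longleftrightarrow> indepH (p ^ n) \<Gamma> E {\<one>\<^bsub>\<Gamma>\<^esub>}" using PR_iff[OF _ E] pp by simp
    also have "\<dots> \<longleftrightarrow> indepH (p ^ (n + 1 - k)) \<Gamma> E H"
      unfolding H_def using core1[OF p k E] core2[OF p k E] by blast
    also have "\<dots> \<longleftrightarrow> inj_on (quot_map \<Gamma> H) E \<and> indepH (p ^ (n + 1 - k)) \<Gamma> E H"
      using inj_from[OF p k E H] by blast
    also have "\<dots> \<longleftrightarrow> inj_on (quot_map \<Gamma> H) E \<and>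
        indepH (p ^ (n + 1 - k)) (\<Gamma> Mod H) (quot_map \<Gamma> H ` E) {\<one>\<^bsub>\<Gamma> Mod H\<^esub>}"
      using quot_indep[OF H E] by blast
    also have "\<dots> \<longleftrightarrow> inj_on (quot_map \<Gamma> H) E \<and>
        PR (p ^ (n + 1 - k)) (\<Gamma> Mod H) (quot_map \<Gamma> H ` E)"
      using comm_group.PR_iff[OF cg _ Ec] pp by simp
    finally show ?thesis unfolding H_def .
  qed
  have one: "1 \<in> {1..n}" using assms(3) by simp
  show ?thesis using per_k one by blast
qed

end
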